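(* Let $n\ge 2$ and let $t$ be a (non-plane, unranked) rooted binary tree with $n$ leaves. Then the number of ranked (non-plane) trees with $n$ leaves that map to $t$ when ranks are forgotten is \[ \frac{(n-1)!}{\prod_{u\in\breve V(t)}\lfloor t(u)\rfloor}\;2^{\gimel(t)-s(t)}, \] where $\breve V(t)$ is the set of internal nodes of $t$, $\lfloor t(u)\rfloor$ is the number of internal nodes of the subtree $t(u)$ rooted at $u$, $\gimel(t)$ is the number of cherry nodes of $t$ (internal nodes both of whose children are leaves), and $s(t)$ is the number of internal nodes $v$ whose two child subtrees are isomorphic.
   Context: All trees are finite, rooted and binary (each internal node has exactly two children). An internal ranking of a tree with $n$ leaves is a bijective labeling of its $n-1$ internal nodes by $\{1,\dots,n-1\}$ such that the root has rank $1$ and each internal node has smaller rank than each of its internal descendants. A ranked tree is a (non-plane) tree together with an internal ranking, two ranked trees being identified if there is a rooted-tree isomorphism between them preserving ranks. Forgetting the ranks maps a ranked tree to a tree (up to rooted isomorphism). *)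

theory Defs
  imports Complex_Main
begin

text \<open>Plane binary trees (shapes); non-plane trees are their classes under \<open>tiso\<close>.\<close>
datatype tree = Leaf | Node tree tree

inductive tiso :: "tree \<Rightarrow> tree \<Rightarrow> bool" where
  "tiso Leaf Leaf"
| "tiso a c \<Longrightarrow> tiso b d \<Longrightarrow> tiso (Node a b) (Node c d)"
| "tiso a d \<Longrightarrow> tiso b c \<Longrightarrow> tiso (Node a b) (Node c d)"

fun leaves :: "tree \<Rightarrow> nat" where
  "leaves Leaf = 1"
| "leaves (Node a b) = leaves a + leaves b"

fun internals :: "tree \<Rightarrow> nat" where
  "internals Leaf = 0"
| "internals (Node a b) = 1 + internals a + internals b"

fun subtree_prod :: "tree \<Rightarrow> nat" where
  "subtree_prod Leaf = 1"
| "subtree_prod (Node a b) = internals (Node a b) * subtree_prod a * subtree_prod b"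

fun cherries :: "tree \<Rightarrow> nat" where
  "cherries Leaf = 0"
| "cherries (Node a b) = (if a = Leaf \<and> b = Leaf then 1 else 0) + cherries a + cherries b"

fun sym_nodes :: "tree \<Rightarrow> nat" where
  "sym_nodes Leaf = 0"
| "sym_nodes (Node a b) = (if tiso a b then 1 else 0) + sym_nodes a + sym_nodes b"

datatype rtree = RLeaf | RNode nat rtree rtree

fun shape :: "rtree \<Rightarrow> tree" where
  "shape RLeaf = Leaf"
| "shape (RNode k a b) = Node (shape a) (shape b)"

fun labels :: "rtree \<Rightarrow> nat list" where
  "labels RLeaf = []"
| "labels (RNode k a b) = k # labels a @ labels b"

fun heap_ordered :: "rtree \<Rightarrow> bool" where
  "heap_ordered RLeaf = True"
| "heap_ordered (RNode k a b) =
     ((\<forall>j \<in> set (labels a) \<union> set (labels b). k < j) \<and> heap_ordered a \<and> heap_ordered b)"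

definition is_ranked :: "nat \<Rightarrow> rtree \<Rightarrow> bool" where
  "is_ranked n r \<longleftrightarrow> leaves (shape r) = n \<and> distinct (labels r)
     \<and> set (labels r) = {1..<n} \<and> heap_ordered r"

inductive riso :: "rtree \<Rightarrow> rtree \<Rightarrow> bool" where
  "riso RLeaf RLeaf"
| "riso a c \<Longrightarrow> riso b d \<Longrightarrow> riso (RNode k a b) (RNode k c d)"
| "riso a d \<Longrightarrow> riso b c \<Longrightarrow> riso (RNode k a b) (RNode k c d)"

text \<open>ranked (non-plane) trees with n leaves mapping to the non-plane tree of t:
  classes of ranked plane trees under rank-preserving isomorphism\<close>
definition ranked_over :: "nat \<Rightarrow> tree \<Rightarrow> rtree set set" where
  "ranked_over n t = {r. is_ranked n r \<and> tiso (shape r) t} // {(x, y). riso x y}"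

end

theory Submission imports Defs "HOL-Library.Multiset" begin

lemma tiso_refl: "tiso t t"
  by (induction t) (auto intro: tiso.intros)

lemma tiso_sym: "tiso a b \<Longrightarrow> tiso b a"
  by (induction rule: tiso.induct) (auto intro: tiso.intros)

lemma tiso_Node_iff: "tiso (Node a b) z \<longleftrightarrow>
  (\<exists>c d. z = Node c d \<and> ((tiso a c \<and> tiso b d) \<or> (tiso a d \<and> tiso b c)))"
  by (auto elim: tiso.cases intro: tiso.intros)

lemma tiso_Leaf_iff: "tiso Leaf z \<longleftrightarrow> z = Leaf"
  by (auto elim: tiso.cases intro: tiso.intros)

lemma tiso_trans: "tiso a b \<Longrightarrow> tiso b z \<Longrightarrow> tiso a z"
proof (induction a arbitrary: b z)
  case Leaf then show ?case by (simp add: tiso_Leaf_iff)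
next
  case (Node a1 a2)
  from Node.prems(1) obtain b1 b2 where b: "b = Node b1 b2"
    "(tiso a1 b1 \<and> tiso a2 b2) \<or> (tiso a1 b2 \<and> tiso a2 b1)"
    by (auto simp: tiso_Node_iff)
  from Node.prems(2) b(1) obtain z1 z2 where z: "z = Node z1 z2"
    "(tiso b1 z1 \<and> tiso b2 z2) \<or> (tiso b1 z2 \<and> tiso b2 z1)"
    by (auto simp: tiso_Node_iff)
  have "(tiso a1 z1 \<and> tiso a2 z2) \<or> (tiso a1 z2 \<and> tiso a2 z1)"
    using b(2) z(2) Node.IH by blast
  then show ?case using z(1) by (auto simp: tiso_Node_iff)
qed

lemma tiso_leaves: "tiso a b \<Longrightarrow> leaves a = leaves b"
  by (induction rule: tiso.induct) auto
lemma tiso_internals: "tiso a b \<Longrightarrow> internals a = internals b"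
  by (induction rule: tiso.induct) auto
lemma tiso_prod: "tiso a b \<Longrightarrow> subtree_prod a = subtree_prod b"
  by (induction rule: tiso.induct) (auto dest!: tiso_internals simp: algebra_simps)
lemma tiso_Leaf: "tiso a b \<Longrightarrow> (a = Leaf) = (b = Leaf)"
  by (induction rule: tiso.induct) auto
lemma tiso_cherries: "tiso a b \<Longrightarrow> cherries a = cherries b"
  by (induction rule: tiso.induct) (auto dest: tiso_Leaf)
lemma tiso_iff: "tiso a c \<Longrightarrow> tiso b d \<Longrightarrow> tiso a b = tiso c d"
proof -
  assume ac: "tiso a c" and bd: "tiso b d"
  show ?thesis
  proof
    assume "tiso a b"
    then have "tiso c b" using tiso_trans[OF tiso_sym[OF ac]] by blast
    then show "tiso c d" using tiso_trans bd by blast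
  next
    assume "tiso c d"
    then have "tiso a d" using tiso_trans[OF ac] by blast
    then show "tiso a b" using tiso_trans tiso_sym[OF bd] by blast
  qed
qed
lemma tiso_sym_nodes: "tiso a b \<Longrightarrow> sym_nodes a = sym_nodes b"
proof (induction rule: tiso.induct)
  case 1 then show ?case by simp
next
  case (2 a c b d)
  have "tiso a b = tiso c d" using tiso_iff 2 by blast
  then show ?case using 2 by simp
next
  case (3 a d b c)
  have "tiso a b = tiso d c" using tiso_iff 3 by blast
  moreover have "tiso d c = tiso c d" using tiso_sym by blast
  ultimately show ?case using 3 by simp
qed

lemma leaves_internals: "leaves t = internals t + 1"
  by (induction t) auto
lemma cherries_le: "cherries t \<le> internals t"
  by (induction t) auto

lemma riso_refl: "riso t t"
  by (induction t) (auto intro: riso.intros)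
lemma riso_sym: "riso a b \<Longrightarrow> riso b a"
  by (induction rule: riso.induct) (auto intro: riso.intros)
lemma riso_Node_iff: "riso (RNode k a b) z \<longleftrightarrow>
  (\<exists>c d. z = RNode k c d \<and> ((riso a c \<and> riso b d) \<or> (riso a d \<and> riso b c)))"
  by (auto elim: riso.cases intro: riso.intros)

lemma riso_Leaf_iff: "riso RLeaf z \<longleftrightarrow> z = RLeaf"
  by (auto elim: riso.cases intro: riso.intros)

lemma riso_trans: "riso a b \<Longrightarrow> riso b z \<Longrightarrow> riso a z"
proof (induction a arbitrary: b z)
  case RLeaf then show ?case by (simp add: riso_Leaf_iff)
next
  case (RNode k a1 a2)
  from RNode.prems(1) obtain b1 b2 where b: "b = RNode k b1 b2"
    "(riso a1 b1 \<and> riso a2 b2) \<or> (riso a1 b2 \<and> riso a2 b1)"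
    by (auto simp: riso_Node_iff)
  from RNode.prems(2) b(1) obtain z1 z2 where z: "z = RNode k z1 z2"
    "(riso b1 z1 \<and> riso b2 z2) \<or> (riso b1 z2 \<and> riso b2 z1)"
    by (auto simp: riso_Node_iff)
  have "(riso a1 z1 \<and> riso a2 z2) \<or> (riso a1 z2 \<and> riso a2 z1)"
    using b(2) z(2) RNode.IH by blast
  then show ?case using z(1) by (auto simp: riso_Node_iff)
qed

lemma riso_mset: "riso a b \<Longrightarrow> mset (labels a) = mset (labels b)"
  by (induction rule: riso.induct) (auto simp: add_ac)
lemma riso_set: "riso a b \<Longrightarrow> set (labels a) = set (labels b)"
  using riso_mset mset_eq_setD by blast
lemma riso_distinct: "riso a b \<Longrightarrow> distinct (labels a) = distinct (labels b)"
  using riso_mset mset_eq_imp_distinct_iff by blast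
lemma riso_shape: "riso a b \<Longrightarrow> tiso (shape a) (shape b)"
  by (induction rule: riso.induct) (auto intro: tiso.intros)
lemma riso_heap: "riso a b \<Longrightarrow> heap_ordered a \<Longrightarrow> heap_ordered b"
  by (induction rule: riso.induct) (auto dest: riso_set)

lemma shape_Leaf: "(shape r = Leaf) = (r = RLeaf)"
  by (cases r) auto
lemma labels_Nil: "(labels r = []) = (r = RLeaf)"
  by (cases r) auto
lemma length_labels: "length (labels r) = internals (shape r)"
  by (induction r) auto


lemma arith2:
  assumes "(x::nat) * 2^p = 2^q" "y * 2^r = 2^s"
  shows "(x*y + y*x) * 2^(p+r) = 2^(Suc (q+s))"
proof -
  have "(x*y + y*x) * 2^(p+r) = 2 * ((x*2^p) * (y*2^r))" by (simp add: power_add algebra_simps)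
  also have "\<dots> = 2^(Suc (q+s))" using assms by (simp add: power_add)
  finally show ?thesis .
qed

lemma arith1:
  assumes "(x::nat) * 2^p = 2^q" "y * 2^r = 2^s"
  shows "(x*y) * 2^(Suc (p+r)) = 2^(Suc (q+s))"
proof -
  have "(x*y) * 2^(Suc (p+r)) = 2 * ((x*2^p) * (y*2^r))" by (simp add: power_add algebra_simps)
  also have "\<dots> = 2^(Suc (q+s))" using assms by (simp add: power_add)
  finally show ?thesis .
qed

lemma riso_class_card:
  "distinct (labels r) \<Longrightarrow> card {r'. riso r r'} * 2 ^ cherries (shape r) = 2 ^ internals (shape r)"
proof (induction r)
  case RLeaf
  have "{r'. riso RLeaf r'} = {RLeaf}" by (auto simp: riso_Leaf_iff)
  then show ?case by simp
next
  case (RNode k a b)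
  let ?I = "\<lambda>r. {r'. riso r r'}"
  let ?f = "\<lambda>(c,d). RNode k c d"
  have da: "distinct (labels a)" and db: "distinct (labels b)"
    and dis: "set (labels a) \<inter> set (labels b) = {}" using RNode.prems by auto
  have IHa: "card (?I a) * 2 ^ cherries (shape a) = 2 ^ internals (shape a)" using RNode.IH(1) da .
  have IHb: "card (?I b) * 2 ^ cherries (shape b) = 2 ^ internals (shape b)" using RNode.IH(2) db .
  have eq: "?I (RNode k a b) = ?f ` (?I a \<times> ?I b) \<union> ?f ` (?I b \<times> ?I a)"
  proof
    show "?I (RNode k a b) \<subseteq> ?f ` (?I a \<times> ?I b) \<union> ?f ` (?I b \<times> ?I a)"
    proof
      fix x assume "x \<in> ?I (RNode k a b)"
      then obtain c d where "x = RNode k c d" "(riso a c \<and> riso b d) \<or> (riso a d \<and> riso b c)"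
        by (auto simp: riso_Node_iff)
      then show "x \<in> ?f ` (?I a \<times> ?I b) \<union> ?f ` (?I b \<times> ?I a)"
        by force
    qed
  next
    show "?f ` (?I a \<times> ?I b) \<union> ?f ` (?I b \<times> ?I a) \<subseteq> ?I (RNode k a b)"
      by (auto simp: riso_Node_iff)
  qed
  show ?case
  proof (cases "a = RLeaf \<and> b = RLeaf")
    case True
    then have "?I (RNode k a b) = {RNode k RLeaf RLeaf}"
      using eq by (auto simp: riso_Leaf_iff)
    then show ?thesis using True by simp
  next
    case False
    have inj: "inj ?f" by (auto simp: inj_def)
    have disj: "?f ` (?I a \<times> ?I b) \<inter> ?f ` (?I b \<times> ?I a) = {}"
    proof (rule ccontr)
      assume "?f ` (?I a \<times> ?I b) \<inter> ?f ` (?I b \<times> ?I a) \<noteq> {}"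
      then obtain c where ac: "riso a c" and bc: "riso b c" by auto
      have "riso a b" using riso_trans[OF ac riso_sym[OF bc]] .
      then have "set (labels a) = set (labels b)" by (rule riso_set)
      with dis have "labels a = [] \<and> labels b = []" by auto
      with False show False by (simp add: labels_Nil)
    qed
    have fa: "finite (?I a)" using IHa by (metis card.infinite mult_0 power_not_zero zero_neq_numeral)
    have fb: "finite (?I b)" using IHb by (metis card.infinite mult_0 power_not_zero zero_neq_numeral)
    have "card (?I (RNode k a b)) = card (?I a) * card (?I b) + card (?I b) * card (?I a)"
      unfolding eq using disj fa fb
      by (simp add: card_Un_disjoint card_image inj_on_subset[OF inj] card_cartesian_product)
    moreover have "cherries (shape (RNode k a b)) = cherries (shape a) + cherries (shape b)"
      using False by (auto simp: shape_Leaf)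
    ultimately show ?thesis using arith2[OF IHa IHb] by simp
  qed
qed

lemma tiso_sym_iff: "tiso a b = tiso b a"
  using tiso_sym by blast

lemma shapes_card0: "card {s. tiso t s} * 2 ^ sym_nodes t = 2 ^ internals t"
proof (induction t)
  case Leaf
  have "{s. tiso Leaf s} = {Leaf}" by (auto simp: tiso_Leaf_iff)
  then show ?case by simp
next
  case (Node a b)
  let ?S = "\<lambda>t. {s. tiso t s}"
  let ?f = "\<lambda>(c,d). Node c d"
  have eq: "?S (Node a b) = ?f ` (?S a \<times> ?S b) \<union> ?f ` (?S b \<times> ?S a)"
  proof
    show "?S (Node a b) \<subseteq> ?f ` (?S a \<times> ?S b) \<union> ?f ` (?S b \<times> ?S a)"
    proof
      fix x assume "x \<in> ?S (Node a b)"
      then obtain c d where "x = Node c d" "(tiso a c \<and> tiso b d) \<or> (tiso a d \<and> tiso b c)"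
        by (auto simp: tiso_Node_iff)
      then show "x \<in> ?f ` (?S a \<times> ?S b) \<union> ?f ` (?S b \<times> ?S a)"
        by force
    qed
  next
    show "?f ` (?S a \<times> ?S b) \<union> ?f ` (?S b \<times> ?S a) \<subseteq> ?S (Node a b)"
      by (auto simp: tiso_Node_iff)
  qed
  have inj: "inj ?f" by (auto simp: inj_def)
  have fa: "finite (?S a)" using Node.IH(1) by (metis card.infinite mult_0 power_not_zero zero_neq_numeral)
  have fb: "finite (?S b)" using Node.IH(2) by (metis card.infinite mult_0 power_not_zero zero_neq_numeral)
  show ?case
  proof (cases "tiso a b")
    case True
    have "?S a = ?S b"
    proof (intro Collect_cong iffI)
      fix x assume "tiso a x" then show "tiso b x" using tiso_trans[OF tiso_sym[OF True]] by blast
    next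
      fix x assume "tiso b x" then show "tiso a x" using tiso_trans[OF True] by blast
    qed
    then have "?S (Node a b) = ?f ` (?S a \<times> ?S b)" using eq by simp
    then have "card (?S (Node a b)) = card (?S a) * card (?S b)"
      by (simp add: card_image inj_on_subset[OF inj] card_cartesian_product)
    then show ?thesis using True arith1[OF Node.IH] by simp
  next
    case False
    have disj: "?f ` (?S a \<times> ?S b) \<inter> ?f ` (?S b \<times> ?S a) = {}"
    proof (rule ccontr)
      assume "?f ` (?S a \<times> ?S b) \<inter> ?f ` (?S b \<times> ?S a) \<noteq> {}"
      then obtain c where ac: "tiso a c" and bc: "tiso b c" by auto
      have "tiso a b" using tiso_trans[OF ac tiso_sym[OF bc]] .
      with False show False by simp
    qed
    have "card (?S (Node a b)) = card (?S a) * card (?S b) + card (?S b) * card (?S a)"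
      unfolding eq using disj fa fb
      by (simp add: card_Un_disjoint card_image inj_on_subset[OF inj] card_cartesian_product)
    then show ?thesis using False arith2[OF Node.IH] by simp
  qed
qed

lemma shapes_card: "card {s. tiso s t} * 2 ^ sym_nodes t = 2 ^ internals t"
proof -
  have "{s. tiso s t} = {s. tiso t s}" using tiso_sym by blast
  then show ?thesis using shapes_card0[of t] by simp
qed


definition Lab :: "tree \<Rightarrow> nat set \<Rightarrow> rtree set" where
  "Lab s S = {r. shape r = s \<and> distinct (labels r) \<and> set (labels r) = S \<and> heap_ordered r}"

lemma lab_card:
  "finite S \<Longrightarrow> card S = internals s \<Longrightarrow> card (Lab s S) * subtree_prod s = fact (internals s)"
proof (induction s arbitrary: S)
  case Leaf
  then have "S = {}" by simp
  then have "Lab Leaf S = {RLeaf}" by (auto simp: Lab_def shape_Leaf)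
  then show ?case by simp
next
  case (Node a b)
  define m where "m = Min S"
  define T where "T = S - {m}"
  define ka where "ka = internals a"
  define kb where "kb = internals b"
  have Sne: "S \<noteq> {}" using Node.prems by auto
  have mS: "m \<in> S" using Sne Node.prems(1) by (simp add: m_def)
  have mle: "\<And>j. j \<in> S \<Longrightarrow> m \<le> j" using Node.prems(1) by (simp add: m_def)
  have fT: "finite T" using Node.prems(1) by (simp add: T_def)
  have cT: "card T = ka + kb" using Node.prems mS by (simp add: T_def ka_def kb_def)
  define Ix where "Ix = {A. A \<subseteq> T \<and> card A = ka}"
  let ?f = "\<lambda>(x,y). RNode m x y"
  define F where "F = (\<lambda>A. ?f ` (Lab a A \<times> Lab b (T - A)))"
  have eq: "Lab (Node a b) S = (\<Union>A\<in>Ix. F A)"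
  proof
    show "Lab (Node a b) S \<subseteq> (\<Union>A\<in>Ix. F A)"
    proof
      fix r assume r: "r \<in> Lab (Node a b) S"
      then obtain k x y where rr: "r = RNode k x y" "shape x = a" "shape y = b"
        by (cases r) (auto simp: Lab_def)
      have d: "distinct (k # labels x @ labels y)" and st: "set (k # labels x @ labels y) = S"
        and h: "\<forall>j \<in> set (labels x) \<union> set (labels y). k < j" "heap_ordered x" "heap_ordered y"
        using r rr by (auto simp: Lab_def)
      have kS: "k \<in> S" using st by auto
      have kle: "k \<le> j" if "j \<in> S" for j
      proof -
        have "j = k \<or> j \<in> set (labels x) \<union> set (labels y)" using that st by auto
        then show ?thesis using h(1) by (auto simp: less_imp_le)
      qed
      have "Min S = k" using Min_eqI[OF Node.prems(1) kle kS] by blast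
      then have "k = m" by (simp add: m_def)
      then have A: "set (labels x) \<subseteq> T" "set (labels y) = T - set (labels x)"
        using d st by (auto simp: T_def)
      have cA: "card (set (labels x)) = ka"
        using d rr by (simp add: distinct_card length_labels ka_def)
      show "r \<in> (\<Union>A\<in>Ix. F A)"
        unfolding Ix_def F_def using A cA rr d h \<open>k = m\<close>
        by (auto simp: Lab_def image_iff intro!: bexI[of _ "set (labels x)"])
    qed
  next
    show "(\<Union>A\<in>Ix. F A) \<subseteq> Lab (Node a b) S"
    proof
      fix r assume "r \<in> (\<Union>A\<in>Ix. F A)"
      then obtain A x y where A: "A \<subseteq> T" and rr: "r = RNode m x y"
        and x: "x \<in> Lab a A" and y: "y \<in> Lab b (T - A)"
        unfolding Ix_def F_def by auto
      have "\<forall>j \<in> T. m < j" using mle by (force simp: T_def)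
      then show "r \<in> Lab (Node a b) S"
        using x y A rr mS unfolding Lab_def T_def by auto
    qed
  qed
  have fIx: "finite Ix" using fT by (simp add: Ix_def)
  have cIx: "card Ix = (ka + kb) choose ka" using fT cT by (simp add: Ix_def n_subsets)
  have inj: "inj ?f" by (auto simp: inj_def)
  have cF: "card (F A) * (subtree_prod a * subtree_prod b) = fact ka * fact kb" if "A \<in> Ix" for A
  proof -
    have A: "A \<subseteq> T" "card A = ka" using that by (auto simp: Ix_def)
    have fA: "finite A" using A fT finite_subset by blast
    have c1: "card (Lab a A) * subtree_prod a = fact ka"
      using Node.IH(1)[OF fA] A by (simp add: ka_def)
    have c2: "card (Lab b (T - A)) * subtree_prod b = fact kb"
      using Node.IH(2)[of "T - A"] A fT cT by (simp add: kb_def card_Diff_subset fA)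
    have "card (F A) = card (Lab a A) * card (Lab b (T - A))"
      by (simp add: F_def card_image inj_on_subset[OF inj] card_cartesian_product)
    then show ?thesis using c1 c2 by (metis mult.assoc mult.left_commute)
  qed
  have finF: "finite (F A)" if "A \<in> Ix" for A
  proof (rule ccontr)
    assume "infinite (F A)" then have "card (F A) = 0" by simp
    with cF[OF that] show False by simp
  qed
  have disjF: "\<forall>A\<in>Ix. \<forall>B\<in>Ix. A \<noteq> B \<longrightarrow> F A \<inter> F B = {}"
    by (auto simp: F_def Lab_def)
  have "card (Lab (Node a b) S) = (\<Sum>A\<in>Ix. card (F A))"
    unfolding eq using fIx finF disjF by (simp add: card_UN_disjoint)
  then have "card (Lab (Node a b) S) * (subtree_prod a * subtree_prod b) = (\<Sum>A\<in>Ix. fact ka * fact kb)"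
    using cF by (simp add: sum_distrib_right)
  also have "\<dots> = fact (ka + kb)"
    using cIx binomial_fact_lemma[of ka "ka + kb"] by (simp add: algebra_simps)
  finally have "card (Lab (Node a b) S) * (subtree_prod a * subtree_prod b) = fact (ka + kb)" .
  then show ?case
    by (simp add: ka_def kb_def algebra_simps)
qed


theorem lemma2p4:
  fixes t :: tree and n :: nat
  assumes "n \<ge> 2" and "leaves t = n"
  shows "real (card (ranked_over n t)) =
    (fact (n - 1) :: real) / real (subtree_prod t) * 2 ^ cherries t / 2 ^ sym_nodes t"
proof -
  define K where "K = n - 1"
  have K: "internals t = K" using assms(2) leaves_internals[of t] by (simp add: K_def)
  define St where "St = {s. tiso s t}"
  define P where "P = {r. is_ranked n r \<and> tiso (shape r) t}"
  define I where "I = (\<lambda>r. {r'. riso r r'})"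
  have cSt: "card St * 2 ^ sym_nodes t = 2 ^ K" using shapes_card[of t] K by (simp add: St_def)
  have fSt: "finite St" using cSt by (metis card.infinite mult_0 power_not_zero zero_neq_numeral)
  have Peq: "P = (\<Union>s\<in>St. Lab s {1..<n})"
    unfolding P_def St_def Lab_def is_ranked_def using assms(2)
    by (auto dest: tiso_leaves)
  have cLab: "card (Lab s {1..<n}) * subtree_prod t = fact K" if "s \<in> St" for s
  proof -
    have "tiso s t" using that by (simp add: St_def)
    then have "internals s = K" "subtree_prod s = subtree_prod t"
      using K by (auto dest: tiso_internals tiso_prod)
    then show ?thesis using lab_card[of "{1..<n}" s] by (simp add: K_def)
  qed
  have finLab: "finite (Lab s {1..<n})" if "s \<in> St" for s
  proof (rule ccontr)
    assume "infinite (Lab s {1..<n})" then have "card (Lab s {1..<n}) = 0" by simp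
    with cLab[OF that] show False by simp
  qed
  have disjLab: "\<forall>s\<in>St. \<forall>s'\<in>St. s \<noteq> s' \<longrightarrow> Lab s {1..<n} \<inter> Lab s' {1..<n} = {}"
    by (auto simp: Lab_def)
  have cP0: "card P = (\<Sum>s\<in>St. card (Lab s {1..<n}))"
    unfolding Peq using fSt finLab disjLab by (simp add: card_UN_disjoint)
  have cP: "card P * subtree_prod t = card St * fact K"
    using cLab by (simp add: cP0 sum_distrib_right)
  have fP: "finite P" unfolding Peq using fSt finLab by auto
  have ro: "ranked_over n t = I ` P"
    unfolding ranked_over_def P_def I_def quotient_def by auto
  have IP: "I r \<subseteq> P" if "r \<in> P" for r
  proof
    fix x assume "x \<in> I r" then have rx: "riso r x" by (simp add: I_def)
    have ts: "tiso (shape r) (shape x)" using riso_shape[OF rx] .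
    have "leaves (shape x) = leaves (shape r)" using tiso_leaves[OF ts] by simp
    moreover have "set (labels x) = set (labels r)" using riso_set[OF rx] by simp
    moreover have "distinct (labels x)" using riso_distinct[OF rx] that by (simp add: P_def is_ranked_def)
    moreover have "heap_ordered x" using riso_heap[OF rx] that by (simp add: P_def is_ranked_def)
    moreover have "tiso (shape x) t" using tiso_trans[OF tiso_sym[OF ts]] that by (simp add: P_def)
    ultimately show "x \<in> P" using that by (simp add: P_def is_ranked_def)
  qed
  have UIP: "\<Union>(I ` P) = P" using IP by (auto simp: I_def intro: riso_refl)
  have cI: "card c = 2 ^ (K - cherries t)" if cIP: "c \<in> I ` P" for c
  proof -
    obtain r where r: "r \<in> P" "c = I r" using cIP by auto
    then have d: "distinct (labels r)" and ts: "tiso (shape r) t"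
      by (auto simp: P_def is_ranked_def)
    have "internals (shape r) = K" "cherries (shape r) = cherries t"
      using ts K by (auto dest: tiso_internals tiso_cherries)
    then have "card c * 2 ^ cherries t = 2 ^ K" using riso_class_card[OF d] r by (simp add: I_def)
    moreover have "cherries t \<le> K" using cherries_le[of t] K by simp
    ultimately show ?thesis
      by (metis le_add_diff_inverse2 power_add mult_right_cancel power_not_zero zero_neq_numeral)
  qed
  have disjI: "\<forall>c1\<in>I ` P. \<forall>c2\<in>I ` P. c1 \<noteq> c2 \<longrightarrow> c1 \<inter> c2 = {}"
  proof (intro ballI impI)
    fix c1 c2 assume "c1 \<in> I ` P" "c2 \<in> I ` P" "c1 \<noteq> c2"
    then obtain r1 r2 where "c1 = I r1" "c2 = I r2" by auto
    show "c1 \<inter> c2 = {}"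
    proof (rule ccontr)
      assume "c1 \<inter> c2 \<noteq> {}"
      then obtain x where x1: "riso r1 x" and x2: "riso r2 x"
        using \<open>c1 = I r1\<close> \<open>c2 = I r2\<close> by (auto simp: I_def)
      have r12: "riso r1 r2" using riso_trans[OF x1 riso_sym[OF x2]] .
      have "I r1 = I r2"
      proof (unfold I_def, intro Collect_cong iffI)
        fix y assume "riso r1 y" then show "riso r2 y" using riso_trans[OF riso_sym[OF r12]] by blast
      next
        fix y assume "riso r2 y" then show "riso r1 y" using riso_trans[OF r12] by blast
      qed
      with \<open>c1 = I r1\<close> \<open>c2 = I r2\<close> \<open>c1 \<noteq> c2\<close> show False by simp
    qed
  qed
  have "2 ^ (K - cherries t) * card (I ` P) = card (\<Union>(I ` P))"
  proof -
    have fIP: "finite (I ` P)" using fP by simp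
    have fU: "finite (\<Union>(I ` P))" using fP UIP by simp
    have cc: "\<forall>c\<in>I ` P. card c = 2 ^ (K - cherries t)" using cI by blast
    show ?thesis by (rule card_partition[OF fIP fU]) (use cI disjI in blast)+
  qed
  then have cC: "card P = 2 ^ (K - cherries t) * card (ranked_over n t)" using UIP ro by simp
  have chK: "cherries t \<le> K" using cherries_le[of t] K by simp
  have pos: "subtree_prod t > 0" by (induction t) auto
  have "card (ranked_over n t) * subtree_prod t * 2 ^ sym_nodes t * 2 ^ K
        = fact K * 2 ^ cherries t * 2 ^ K"
  proof -
    have "card (ranked_over n t) * subtree_prod t * 2 ^ sym_nodes t * 2 ^ K
       = card (ranked_over n t) * 2 ^ (K - cherries t) * subtree_prod t * 2 ^ sym_nodes t * 2 ^ cherries t"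
      using chK by (simp add: power_add[symmetric])
    also have "\<dots> = card St * 2 ^ sym_nodes t * fact K * 2 ^ cherries t"
      using cP cC by (simp add: algebra_simps)
    also have "\<dots> = fact K * 2 ^ cherries t * 2 ^ K" using cSt by simp
    finally show ?thesis .
  qed
  then have "card (ranked_over n t) * subtree_prod t * 2 ^ sym_nodes t = fact K * 2 ^ cherries t"
    by simp
  then have "real (card (ranked_over n t)) * real (subtree_prod t) * 2 ^ sym_nodes t
     = fact K * 2 ^ cherries t"
    by (metis (mono_tags, opaque_lifting) of_nat_fact of_nat_mult of_nat_numeral of_nat_power)
  then show ?thesis using pos unfolding K_def
    by (simp add: field_simps)
qed

end
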